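(* Let $p/q$ be a reduced fraction with $q\ge1$. For any integer $0 \le N <q$ and any $x \in \mathbb{R}$, \[ P_N (p/q,x) \cdot P_{q-N-1} (p/q,-x) = \begin{cases} \frac{|\sin (\pi qx)|}{|\sin (\pi x)|} & \text{if } x \notin \mathbb{Z}, \\ q & \text{if } x \in \mathbb{Z} . \end{cases} \] In particular, for any $x \in \mathbb{R}$, $P_{q-1}(p/q,x)$ equals $\frac{|\sin (\pi qx)|}{|\sin (\pi x)|}$ if $x\notin\mathbb{Z}$ and $q$ if $x\in\mathbb{Z}$.
   Context: For real $\beta,x$ and integer $N\ge0$, $P_N(\beta,x)=\prod_{n=1}^N|2\sin(\pi(n\beta+x))|$ (empty product $=1$). *)

theory Defs
  imports Complex_Main
begin

definition P :: "nat \<Rightarrow> real \<Rightarrow> real \<Rightarrow> real" where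
  "P N \<beta> x = (\<Prod>n = 1..N. \<bar>2 * sin (pi * (real n * \<beta> + x))\<bar>)"

end

theory Submission imports Defs "HOL-Computational_Algebra.Fundamental_Theorem_Algebra" begin

lemma geom_poly:
  "[:-1, 1:] * (\<Sum>j<q. monom (1::complex) j) = monom 1 q - 1"
proof -
  have "poly ([:-1, 1:] * (\<Sum>j<q. monom (1::complex) j)) = poly (monom 1 q - 1)"
  proof
    fix w :: complex
    show "poly ([:-1, 1:] * (\<Sum>j<q. monom (1::complex) j)) w = poly (monom 1 q - 1) w"
    proof -
      have "poly ([:-1, 1:] * (\<Sum>j<q. monom (1::complex) j)) w = (w - 1) * (\<Sum>j<q. w ^ j)"
        by (simp add: poly_sum poly_monom algebra_simps)
      also have "\<dots> = w ^ q - 1" by (rule power_diff_1_eq[symmetric])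
      also have "\<dots> = poly (monom 1 q - 1) w" by (simp add: poly_monom)
      finally show ?thesis .
    qed
  qed
  then show ?thesis by (simp add: poly_eq_poly_eq_iff)
qed

lemma roots_prod:
  assumes q: "q \<ge> 1"
  shows "(\<Prod>z\<in>{z::complex. z ^ q = 1} - {1}. (w - z)) = (\<Sum>j<q. w ^ j)"
proof -
  define p :: "complex poly" where "p = monom 1 q - 1"
  have pz: "poly p z = z ^ q - 1" for z by (simp add: p_def poly_monom)
  have degp: "degree p = q"
  proof -
    have "p = monom 1 q + (- 1)" unfolding p_def by simp
    also have "degree \<dots> = degree (monom (1::complex) q)"
    proof (rule degree_add_eq_left)
      have "degree (- 1 :: complex poly) = 0" by (simp only: degree_minus degree_1)
      then show "degree (- 1 :: complex poly) < degree (monom (1::complex) q)"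
        using q degree_monom_eq[of "1::complex" q] by simp
    qed
    also have "\<dots> = q" using degree_monom_eq[of "1::complex" q] by simp
    finally show ?thesis .
  qed
  have lc: "lead_coeff p = 1" using q degp unfolding p_def by (simp add: coeff_diff)
  have pd: "pderiv p = monom (of_nat q) (q - 1)" unfolding p_def
    by (simp add: pderiv_diff pderiv_monom)
  have sf: "rsquarefree p"
    unfolding rsquarefree_roots
  proof (intro allI notI)
    fix a assume "poly p a = 0 \<and> poly (pderiv p) a = 0"
    then have a1: "a ^ q = 1" and a2: "of_nat q * a ^ (q - 1) = 0" by (simp_all add: pz pd poly_monom)
    from a2 q have "a = 0" by simp
    with a1 q show False by (simp add: power_0_left)
  qed
  define R where "R = {z::complex. z ^ q = 1}"
  have roots: "{z. poly p z = 0} = R" by (auto simp: pz R_def)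
  have fin: "finite R" unfolding R_def using q by (intro finite_roots_unity) auto
  have one: "(1::complex) \<in> R" by (simp add: R_def)
  have dec: "(\<Prod>z\<in>R. [:-z, 1:]) = p"
    using complex_poly_decompose_rsquarefree[OF sf] unfolding lc roots by simp
  have rem: "(\<Prod>z\<in>R. [:-z, 1:]) = [:-1,1:] * (\<Prod>z\<in>R - {1}. [:-z, 1:])"
    by (rule prod.remove[OF fin one])
  have "[:-1,1:] * (\<Prod>z\<in>R - {1}. [:-z, 1:]) = [:-1, 1:] * (\<Sum>j<q. monom (1::complex) j)"
    unfolding geom_poly rem[symmetric] dec p_def ..
  then have eq: "(\<Prod>z\<in>R - {1}. [:-z, 1:]) = (\<Sum>j<q. monom (1::complex) j)"
    using mult_left_cancel[of "[:-1,1:] :: complex poly"] by simp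
  have l: "poly (\<Prod>z\<in>R - {1}. [:-z, 1:]) w = (\<Prod>z\<in>R - {1}. w - z)"
    unfolding poly_prod by (intro prod.cong refl) simp
  have r: "poly (\<Sum>j<q. monom (1::complex) j) w = (\<Sum>j<q. w ^ j)"
    unfolding poly_sum by (intro sum.cong refl) (simp add: poly_monom)
  have "(\<Prod>z\<in>R - {1}. w - z) = (\<Sum>j<q. w ^ j)" using l r eq by metis
  then show ?thesis by (simp only: R_def)
qed


lemma roots_prod_cis:
  assumes q: "q \<ge> 1"
  shows "(\<Prod>k\<in>{1..q-1}. (w - cis (2 * pi * real k / real q))) = (\<Sum>j<q. w ^ j)"
proof -
  define f where "f = (\<lambda>k::nat. cis (2 * pi * real k / real q))"
  have q0: "q > 0" using q by simp
  have bij: "bij_betw f {..<q} {z. z ^ q = 1}" unfolding f_def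
    by (rule bij_betw_roots_unity[OF q0])
  have inj: "inj_on f {..<q}" using bij by (simp add: bij_betw_def)
  have img: "f ` {..<q} = {z. z ^ q = 1}" using bij by (simp add: bij_betw_def)
  have f0: "f 0 = 1" by (simp add: f_def)
  have set: "{1..q-1} = {..<q} - {0}" using q by auto
  have "f ` {1..q-1} = f ` {..<q} - f ` {0}"
    unfolding set by (rule inj_on_image_set_diff[OF inj]) (use q0 in auto)
  then have img2: "f ` {1..q-1} = {z. z ^ q = 1} - {1}" using img f0 by simp
  have inj2: "inj_on f {1..q-1}" using inj by (rule inj_on_subset) auto
  have "(\<Prod>k\<in>{1..q-1}. (w - f k)) = (\<Prod>z\<in>f ` {1..q-1}. w - z)"
    by (rule prod.reindex[OF inj2, symmetric, unfolded comp_def])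
  also have "\<dots> = (\<Sum>j<q. w ^ j)" unfolding img2 by (rule roots_prod[OF q])
  finally show ?thesis unfolding f_def .
qed

lemma abs_sin_cis: "\<bar>2 * sin (pi * s)\<bar> = cmod (cis (2 * pi * s) - 1)"
proof -
  define a where "a = pi * s"
  have "cis (2 * pi * s) - 1 = cis a * (cis a - cis (- a))"
    by (simp add: a_def right_diff_distrib cis_mult mult.assoc)
  also have "cis a - cis (- a) = Complex 0 (2 * sin a)"
    by (simp add: complex_eq_iff)
  finally have "cmod (cis (2 * pi * s) - 1) = cmod (Complex 0 (2 * sin a))"
    by (simp add: norm_mult)
  also have "\<dots> = sqrt ((2 * sin a)^2)" by (simp add: cmod_def power_mult_distrib)
  also have "\<dots> = \<bar>2 * sin a\<bar>" by (rule real_sqrt_abs)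
  finally show ?thesis by (simp add: a_def)
qed

lemma abs_sin_shift: "\<bar>2 * sin (pi * (a + x))\<bar> = cmod (cis (2 * pi * x) - cis (- (2 * pi * a)))"
proof -
  have "\<bar>2 * sin (pi * (a + x))\<bar> = cmod (cis (2 * pi * (a + x)) - 1)" by (rule abs_sin_cis)
  also have "cis (2 * pi * (a + x)) - 1 = cis (2 * pi * a) * (cis (2 * pi * x) - cis (- (2 * pi * a)))"
    by (simp add: right_diff_distrib cis_mult distrib_left)
  also have "cmod \<dots> = cmod (cis (2 * pi * x) - cis (- (2 * pi * a)))"
    by (simp add: norm_mult)
  finally show ?thesis .
qed

lemma cis_int_shift: "cis (a + 2 * pi * real_of_int k) = cis a"
proof -
  have "cis (a + 2 * pi * real_of_int k) = cis a * cis (2 * pi * real_of_int k)"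
    by (rule cis_mult[symmetric])
  also have "cis (2 * pi * real_of_int k) = 1" by (rule cis_multiple_2pi) simp
  finally show ?thesis by simp
qed

lemma mult_mod_bij:
  assumes q: "q \<ge> 1" and cop: "coprime p (int q)"
  shows "bij_betw (\<lambda>m. nat ((int m * p) mod int q)) {1..q-1} {1..q-1}"
proof -
  let ?h = "\<lambda>m. nat ((int m * p) mod int q)"
  have cop': "coprime (int q) p" using cop by (simp add: coprime_commute)
  have into: "?h ` {1..q-1} \<subseteq> {1..q-1}"
  proof
    fix y assume "y \<in> ?h ` {1..q-1}"
    then obtain m where m: "m \<in> {1..q-1}" and y: "y = ?h m" by auto
    have r0: "(int m * p) mod int q \<noteq> 0"
    proof
      assume "(int m * p) mod int q = 0"
      then have "int q dvd int m * p" by auto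
      then have "int q dvd int m" using cop' by (simp add: coprime_dvd_mult_left_iff)
      then have "q dvd m" by simp
      with m show False by (auto dest: dvd_imp_le)
    qed
    have "(int m * p) mod int q < int q" using q by simp
    moreover have "(int m * p) mod int q \<ge> 0" using q by simp
    ultimately show "y \<in> {1..q-1}" using r0 y by auto
  qed
  have inj: "inj_on ?h {1..q-1}"
  proof
    fix m m' assume m: "m \<in> {1..q-1}" and m': "m' \<in> {1..q-1}" and e: "?h m = ?h m'"
    have "(int m * p) mod int q = (int m' * p) mod int q"
      using e q by (simp add: nat_eq_iff)
    then have "int q dvd int m * p - int m' * p" by (simp add: mod_eq_dvd_iff)
    then have "int q dvd (int m - int m') * p" by (simp add: left_diff_distrib)
    then have d: "int q dvd (int m - int m')" using cop' by (simp add: coprime_dvd_mult_left_iff)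
    have "\<bar>int m - int m'\<bar> < int q" using m m' by auto
    have "int m - int m' = 0"
    proof (rule ccontr)
      assume ne: "int m - int m' \<noteq> 0"
      from dvd_imp_le_int[OF ne d] have "\<bar>int q\<bar> \<le> \<bar>int m - int m'\<bar>" .
      with \<open>\<bar>int m - int m'\<bar> < int q\<close> show False by simp
    qed
    then show "m = m'" by simp
  qed
  show ?thesis unfolding bij_betw_def using inj endo_inj_surj[OF _ into inj] by simp
qed


lemma main_identity:
  fixes p :: int and q :: nat and N :: nat and x :: real
  assumes q: "q \<ge> 1" and cop: "coprime p (int q)" and N: "N < q"
  shows "P N (real_of_int p / real q) x * P (q - N - 1) (real_of_int p / real q) (- x) =
           (if x \<notin> \<int> then \<bar>sin (pi * real q * x)\<bar> / \<bar>sin (pi * x)\<bar> else real q)"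
proof -
  define \<beta> where "\<beta> = real_of_int p / real q"
  define w where "w = cis (2 * pi * x)"
  define H where "H = (\<lambda>m::nat. cmod (w - cis (2 * pi * (real m * \<beta>))))"
  define h where "h = (\<lambda>m::nat. nat ((int m * p) mod int q))"
  define g where "g = (\<lambda>k::nat. cmod (w - cis (2 * pi * real k / real q)))"
  have qr: "real q \<noteq> 0" using q by simp
  have t1: "\<bar>2 * sin (pi * (real n * \<beta> + x))\<bar> = H (q - n)" if n: "n \<le> q" for n
  proof -
    have a: "\<bar>2 * sin (pi * (real n * \<beta> + x))\<bar> = cmod (w - cis (- (2 * pi * (real n * \<beta>))))"
      unfolding w_def by (rule abs_sin_shift)
    have "2 * pi * (real (q - n) * \<beta>) = - (2 * pi * (real n * \<beta>)) + 2 * pi * real_of_int p"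
      using n qr by (simp add: \<beta>_def of_nat_diff field_simps)
    then have "cis (2 * pi * (real (q - n) * \<beta>)) = cis (- (2 * pi * (real n * \<beta>)))"
      by (simp only: cis_int_shift)
    then show ?thesis unfolding H_def a by simp
  qed
  have t2: "\<bar>2 * sin (pi * (real n * \<beta> + - x))\<bar> = H n" for n
  proof -
    have "\<bar>2 * sin (pi * (real n * \<beta> + - x))\<bar> = \<bar>2 * sin (pi * (- (real n * \<beta>) + x))\<bar>"
    proof -
      have "pi * (real n * \<beta> + - x) = - (pi * (- (real n * \<beta>) + x))" by (simp add: algebra_simps)
      then show ?thesis by (simp only: sin_minus abs_minus mult_minus_right)
    qed
    also have "\<dots> = cmod (w - cis (- (2 * pi * (- (real n * \<beta>)))))"
      unfolding w_def by (rule abs_sin_shift)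
    finally show ?thesis unfolding H_def by simp
  qed
  have P1: "P N \<beta> x = (\<Prod>m\<in>{q-N..q-1}. H m)"
  proof -
    have "P N \<beta> x = (\<Prod>n\<in>{1..N}. H (q - n))"
      unfolding P_def using N by (intro prod.cong refl t1) auto
    also have "\<dots> = (\<Prod>m\<in>(\<lambda>n. q - n) ` {1..N}. H m)"
    proof (rule prod.reindex[symmetric, unfolded comp_def])
      show "inj_on (\<lambda>n. q - n) {1..N}" using N by (auto simp: inj_on_def)
    qed
    also have "(\<lambda>n. q - n) ` {1..N} = {q-N..q-1}"
    proof
      show "(\<lambda>n. q - n) ` {1..N} \<subseteq> {q-N..q-1}" using N by auto
      show "{q-N..q-1} \<subseteq> (\<lambda>n. q - n) ` {1..N}"
      proof
        fix m assume "m \<in> {q-N..q-1}"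
        then have "q - m \<in> {1..N}" "m = q - (q - m)" using N q by auto
        then show "m \<in> (\<lambda>n. q - n) ` {1..N}" by blast
      qed
    qed
    finally show ?thesis .
  qed
  have P2: "P (q - N - 1) \<beta> (- x) = (\<Prod>m\<in>{1..q-N-1}. H m)"
    unfolding P_def by (intro prod.cong refl t2)
  have U: "P N \<beta> x * P (q - N - 1) \<beta> (- x) = (\<Prod>m\<in>{1..q-1}. H m)"
  proof -
    have "{1..q-N-1} \<union> {q-N..q-1} = {1..q-1}" "{1..q-N-1} \<inter> {q-N..q-1} = {}" using N by auto
    then have "(\<Prod>m\<in>{1..q-1}. H m) = (\<Prod>m\<in>{1..q-N-1}. H m) * (\<Prod>m\<in>{q-N..q-1}. H m)"
      using prod.union_disjoint[of "{1..q-N-1}" "{q-N..q-1}" H] by simp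
    then show ?thesis using P1 P2 by simp
  qed
  have Hh: "H m = g (h m)" for m
  proof -
    define r where "r = (int m * p) mod int q"
    define d where "d = (int m * p) div int q"
    have r0: "r \<ge> 0" using q by (simp add: r_def)
    have "int m * p = int q * d + r" by (simp add: r_def d_def)
    then have "real_of_int (int m * p) = real q * real_of_int d + real_of_int r"
      by (metis of_int_add of_int_mult of_int_of_nat_eq)
    moreover have hm: "real (h m) = real_of_int r" using r0 unfolding h_def r_def by simp
    ultimately have "2 * pi * (real m * \<beta>) = 2 * pi * real (h m) / real q + 2 * pi * real_of_int d"
      using qr unfolding hm by (simp add: \<beta>_def field_simps)
    then show ?thesis unfolding H_def g_def by (simp add: cis_int_shift)
  qed
  have "(\<Prod>m\<in>{1..q-1}. H m) = (\<Prod>m\<in>{1..q-1}. g (h m))" by (simp add: Hh)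
  also have "\<dots> = (\<Prod>k\<in>{1..q-1}. g k)"
    by (rule prod.reindex_bij_betw) (unfold h_def, rule mult_mod_bij[OF q cop])
  also have "\<dots> = cmod (\<Prod>k\<in>{1..q-1}. (w - cis (2 * pi * real k / real q)))"
    unfolding g_def by (simp add: prod_norm)
  also have "\<dots> = cmod (\<Sum>j<q. w ^ j)" unfolding roots_prod_cis[OF q] ..
  finally have main: "P N \<beta> x * P (q - N - 1) \<beta> (- x) = cmod (\<Sum>j<q. w ^ j)" using U by simp
  show ?thesis
  proof (cases "x \<in> \<int>")
    case True
    then have "w = 1" unfolding w_def by (rule cis_multiple_2pi)
    then show ?thesis using main True by (simp add: \<beta>_def)
  next
    case False
    have w1: "w \<noteq> 1"
    proof
      assume "w = 1"
      then have "cos (2 * pi * x) = 1" unfolding w_def by (metis cis.sel(1) one_complex.sel(1))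
      then obtain n :: int where "2 * pi * x = real_of_int n * 2 * pi" by (auto simp: cos_one_2pi_int)
      then have "x = real_of_int n" by simp
      with False show False by simp
    qed
    have "(\<Sum>j<q. w ^ j) = (w ^ q - 1) / (w - 1)"
      using w1 by (simp add: power_diff_1_eq)
    then have "cmod (\<Sum>j<q. w ^ j) = cmod (w ^ q - 1) / cmod (w - 1)" by (simp add: norm_divide)
    also have "w ^ q = cis (2 * pi * (real q * x))" unfolding w_def by (simp add: DeMoivre mult_ac)
    also have "cmod (cis (2 * pi * (real q * x)) - 1) = \<bar>2 * sin (pi * (real q * x))\<bar>"
      by (rule abs_sin_cis[symmetric])
    also have "cmod (w - 1) = \<bar>2 * sin (pi * x)\<bar>" unfolding w_def by (rule abs_sin_cis[symmetric])
    finally have "cmod (\<Sum>j<q. w ^ j) = \<bar>sin (pi * real q * x)\<bar> / \<bar>sin (pi * x)\<bar>"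
      by (simp add: abs_mult mult.assoc)
    then show ?thesis using main False by (simp add: \<beta>_def)
  qed
qed

theorem proposition1:
  fixes p :: int and q :: nat and N :: nat and x :: real
  assumes "q \<ge> 1" and "coprime p (int q)" and "N < q"
  shows "P N (real_of_int p / real q) x * P (q - N - 1) (real_of_int p / real q) (- x) =
           (if x \<notin> \<int> then \<bar>sin (pi * real q * x)\<bar> / \<bar>sin (pi * x)\<bar> else real q) \<and>
         P (q - 1) (real_of_int p / real q) x =
           (if x \<notin> \<int> then \<bar>sin (pi * real q * x)\<bar> / \<bar>sin (pi * x)\<bar> else real q)"
proof
  show "P N (real_of_int p / real q) x * P (q - N - 1) (real_of_int p / real q) (- x) =
           (if x \<notin> \<int> then \<bar>sin (pi * real q * x)\<bar> / \<bar>sin (pi * x)\<bar> else real q)"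
    by (rule main_identity[OF assms])
  have "q - 1 < q" using assms(1) by simp
  from main_identity[OF assms(1,2) this, of x]
  have "P (q - 1) (real_of_int p / real q) x * P (q - (q - 1) - 1) (real_of_int p / real q) (- x) =
           (if x \<notin> \<int> then \<bar>sin (pi * real q * x)\<bar> / \<bar>sin (pi * x)\<bar> else real q)" .
  moreover have "P (q - (q - 1) - 1) (real_of_int p / real q) (- x) = 1"
    using assms(1) by (simp add: P_def)
  ultimately show "P (q - 1) (real_of_int p / real q) x =
           (if x \<notin> \<int> then \<bar>sin (pi * real q * x)\<bar> / \<bar>sin (pi * x)\<bar> else real q)" by simp
qed

end
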